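(* Let $p\equiv 1\pmod 4$ be a prime and $\ell\ge 2$ an integer, and put $d=\ell(\ell-1)/2$. Let $Y_0\subset \mathbb{A}^\ell\times\mathbb{A}^d$ be the set of points $(r_1,\ldots,r_\ell,(y_{ij})_{1\le j<i\le \ell})$ satisfying $$r_i-r_j=y_{ij}^2\quad (1\le j<i\le \ell),\qquad y_{ij}\ne 0 \text{ for all } 1\le j<i\le\ell.$$ Then $$n_p(K_\ell)=2^{-d}(\ell!)^{-1}p^{-1}\,|Y_0(\mathbb{F}_p)|.$$
   Context: For $p\equiv 1\pmod 4$ and an $\ell$-tuple $A=(r_1,\ldots,r_\ell)$ of pairwise distinct residues modulo $p$, let $\Gamma_A$ be the graph on vertices $v_1,\ldots,v_\ell$ with $v_i,v_j$ joined by an edge iff $r_i-r_j$ is a nonzero quadratic residue mod $p$ (symmetric since $-1$ is a square). Two tuples are identified if they differ by a permutation of entries or by adding the same residue $a$ to all entries. For a graph $\Gamma$ on $\ell$ vertices, $n_p(\Gamma)$ is the number of such classes of tuples $A$ with $\Gamma_A$ isomorphic to $\Gamma$. $K_\ell$ is the complete graph on $\ell$ vertices. *)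

theory Defs
  imports "HOL-Number_Theory.Number_Theory"
begin

text \<open>Graphs on the vertex set {0..<l} are given by an edge relation
  (only its values on {0..<l} matter).\<close>

definition graph_iso :: "nat \<Rightarrow> (nat \<Rightarrow> nat \<Rightarrow> bool) \<Rightarrow> (nat \<Rightarrow> nat \<Rightarrow> bool) \<Rightarrow> bool" where
  "graph_iso l E F \<longleftrightarrow> (\<exists>f. bij_betw f {0..<l} {0..<l} \<and>
      (\<forall>i\<in>{0..<l}. \<forall>j\<in>{0..<l}. E i j \<longleftrightarrow> F (f i) (f j)))"

definition complete_graph :: "nat \<Rightarrow> nat \<Rightarrow> bool" where
  "complete_graph i j \<longleftrightarrow> i \<noteq> j"

definition tuples :: "int \<Rightarrow> nat \<Rightarrow> (nat \<Rightarrow> int) set" where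
  "tuples p l = {r. (\<forall>i<l. r i \<in> {0..<p}) \<and> (\<forall>i\<ge>l. r i = 0) \<and> inj_on r {0..<l}}"

definition tuple_graph :: "int \<Rightarrow> (nat \<Rightarrow> int) \<Rightarrow> nat \<Rightarrow> nat \<Rightarrow> bool" where
  "tuple_graph p r i j \<longleftrightarrow> i \<noteq> j \<and> \<not> p dvd (r i - r j) \<and> QuadRes p (r i - r j)"

definition tuple_rel :: "int \<Rightarrow> nat \<Rightarrow> ((nat \<Rightarrow> int) \<times> (nat \<Rightarrow> int)) set" where
  "tuple_rel p l = {(r, s). r \<in> tuples p l \<and> s \<in> tuples p l \<and>
      (\<exists>\<sigma> a. bij_betw \<sigma> {0..<l} {0..<l} \<and> (\<forall>i<l. s i = (r (\<sigma> i) + a) mod p))}"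

definition n_p :: "int \<Rightarrow> nat \<Rightarrow> (nat \<Rightarrow> nat \<Rightarrow> bool) \<Rightarrow> nat" where
  "n_p p l \<Gamma> = card {C \<in> tuples p l // tuple_rel p l. \<exists>r\<in>C. graph_iso l (tuple_graph p r) \<Gamma>}"

definition Y0_points :: "int \<Rightarrow> nat \<Rightarrow> ((nat \<Rightarrow> int) \<times> (nat \<Rightarrow> nat \<Rightarrow> int)) set" where
  "Y0_points p l = {(r, y).
      (\<forall>i<l. r i \<in> {0..<p}) \<and> (\<forall>i\<ge>l. r i = 0) \<and>
      (\<forall>i j. (j < i \<and> i < l) \<longrightarrow> y i j \<in> {0..<p}) \<and>
      (\<forall>i j. \<not> (j < i \<and> i < l) \<longrightarrow> y i j = 0) \<and>
      (\<forall>i j. j < i \<and> i < l \<longrightarrow> [r i - r j = (y i j)^2] (mod p) \<and> \<not> [y i j = 0] (mod p))}"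

end

theory Submission
  imports Defs "HOL-Combinatorics.Permutations"
begin

lemma minus_one_QR:
  fixes p :: int
  assumes "prime p" "[p = 1] (mod 4)"
  shows "QuadRes p (-1)"
proof -
  have p0: "p \<ge> 0" using assms(1) by (simp add: prime_ge_0_int)
  obtain n where n: "p = int n" using p0 by (metis nonneg_eq_int)
  have "p mod 4 = 1" using assms(2) by (simp add: cong_def)
  then obtain k where k: "p = 4*k+1" by (metis mult.commute div_mult_mod_eq)
  have "p > 1" using assms(1) prime_gt_1_int by blast
  hence "k \<ge> 1" using k by simp
  have pn: "prime n" using assms(1) n by simp
  have n2: "2 < n" using k \<open>k\<ge>1\<close> n by linarith
  have e0: "n - 1 = 4 * nat k" using k n \<open>k\<ge>1\<close> by linarith
  have e: "(n - 1) div 2 = 2 * nat k" unfolding e0 by simp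
  have "[(Legendre (-1) (int n)) = (-1) ^ ((n - 1) div 2)] (mod int n)"
    using euler_criterion[OF pn n2] by blast
  hence L: "[Legendre (-1) (int n) = 1] (mod int n)" unfolding e by (simp add: power_mult)
  show ?thesis
  proof (rule ccontr)
    assume nq: "\<not> QuadRes p (-1)"
    have "\<not> [-1 = 0] (mod int n)" using n2 by (simp add: cong_def zmod_minus1)
    hence "Legendre (-1) (int n) = -1" using nq n by (simp add: Legendre_def)
    hence "[-1 = 1] (mod int n)" using L by simp
    hence "int n dvd 2" by (simp add: cong_iff_dvd_diff)
    hence "int n \<le> 2" by (rule zdvd_imp_le) simp
    thus False using n2 by simp
  qed
qed

lemma nonres:
  fixes p :: int
  assumes "prime p" "p > 2"
  shows "\<exists>n. 0 < n \<and> n < p \<and> \<not> QuadRes p n"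
proof -
  define S where "S = {1..p-1}"
  define f where "f = (\<lambda>x. x^2 mod p)"
  have fS: "f ` S \<subseteq> S"
  proof
    fix z assume "z \<in> f ` S"
    then obtain x where x: "x \<in> S" "z = x^2 mod p" unfolding f_def by auto
    have "\<not> p dvd x" using x(1) unfolding S_def by (auto dest: zdvd_imp_le)
    hence "\<not> p dvd x^2" using assms(1) prime_dvd_power_iff by (metis prime_dvd_mult_iff power2_eq_square)
    hence "z \<noteq> 0" using x(2) by (simp add: dvd_eq_mod_eq_0)
    moreover have "0 \<le> z" "z < p" using x(2) assms by auto
    ultimately show "z \<in> S" unfolding S_def by auto
  qed
  have "\<not> inj_on f S"
  proof
    assume "inj_on f S"
    moreover have "1 \<in> S" "p - 1 \<in> S" using assms unfolding S_def by auto
    moreover have "f 1 = f (p-1)"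
    proof -
      have "(p-1)^2 = 1 + p*(p-2)" by (simp add: power2_eq_square algebra_simps)
      thus ?thesis unfolding f_def by simp
    qed
    ultimately have "1 = p - 1" by (meson inj_on_def)
    thus False using assms by simp
  qed
  hence "f ` S \<noteq> S" using finite_surj_inj[of S f] unfolding S_def by auto
  with fS obtain n where n: "n \<in> S" "n \<notin> f ` S" by blast
  have "\<not> QuadRes p n"
  proof
    assume "QuadRes p n"
    then obtain y where y: "[y^2 = n] (mod p)" unfolding QuadRes_def by blast
    have nn: "n mod p = n" using n(1) unfolding S_def by auto
    have "f (y mod p) = n" using y nn unfolding f_def cong_def by (simp add: power_mod)
    moreover have "y mod p \<in> S"
    proof -
      have "y mod p \<noteq> 0"
      proof
        assume "y mod p = 0"
        hence "y^2 mod p = 0" by (metis power_mod zero_power2 mod_0)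
        thus False using y nn n(1) unfolding cong_def S_def by simp
      qed
      moreover have "0 \<le> y mod p" "y mod p < p" using assms by auto
      ultimately show ?thesis unfolding S_def by auto
    qed
    ultimately show False using n(2) by blast
  qed
  moreover have "0 < n \<and> n < p" using n(1) unfolding S_def by auto
  ultimately show ?thesis by (intro exI[of _ n]) simp
qed

lemma mod_small_eq:
  fixes x y p :: int
  assumes "0 \<le> x" "x < p" "0 \<le> y" "y < p" "[x = y] (mod p)"
  shows "x = y"
  using assms by (simp add: cong_def)

lemma sqrt_card:
  fixes p c :: int
  assumes "prime p" "p > 2" "QuadRes p c" "\<not> p dvd c"
  shows "card {y\<in>{0..<p}. [c = y^2] (mod p) \<and> \<not> [y = 0] (mod p)} = 2"
proof -
  obtain y0 where y0: "[y0^2 = c] (mod p)" using assms(3) unfolding QuadRes_def by blast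
  define u where "u = y0 mod p"
  define v where "v = p - u"
  have u0: "0 \<le> u" "u < p" using assms(2) unfolding u_def by auto
  have uc: "[u^2 = c] (mod p)" using y0 unfolding u_def cong_def by (simp add: power_mod)
  have un: "u \<noteq> 0"
  proof
    assume "u = 0" then have "[0 = c] (mod p)" using uc by simp
    thus False using assms(4) by (simp add: cong_def dvd_eq_mod_eq_0)
  qed
  have vc: "[v^2 = c] (mod p)"
  proof -
    have "v^2 = u^2 + p*(p - 2*u)" unfolding v_def by (simp add: power2_eq_square algebra_simps)
    hence "[v^2 = u^2] (mod p)" by (simp add: cong_def)
    thus ?thesis using uc cong_trans by blast
  qed
  have uv: "u \<noteq> v"
  proof
    assume "u = v" hence "p = 2*u" unfolding v_def by simp
    hence "2 dvd p" by simp
    hence "(2::int) = 1 \<or> 2 = p" using assms(1) unfolding prime_int_iff by (metis zero_le_numeral)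
    hence "2 = p" by simp
    thus False using assms(2) by simp
  qed
  have "{y\<in>{0..<p}. [c = y^2] (mod p) \<and> \<not> [y = 0] (mod p)} = {u, v}"
  proof (intro equalityI subsetI)
    fix y assume "y \<in> {y\<in>{0..<p}. [c = y^2] (mod p) \<and> \<not> [y = 0] (mod p)}"
    hence y: "0 \<le> y" "y < p" "[y^2 = u^2] (mod p)" using uc by (auto intro: cong_trans cong_sym)
    hence "p dvd (y - u) * (y + u)" by (simp add: cong_iff_dvd_diff power2_eq_square algebra_simps)
    hence "p dvd (y - u) \<or> p dvd (y + u)" using assms(1) prime_dvd_mult_iff by blast
    thus "y \<in> {u, v}"
    proof
      assume "p dvd y - u" hence "[y = u] (mod p)" by (simp add: cong_iff_dvd_diff)
      hence "y = u" using y u0 mod_small_eq by blast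
      thus ?thesis by simp
    next
      assume a: "p dvd y + u"
      have "y - v = (y + u) - p" unfolding v_def by simp
      hence "p dvd y - v" using a by (metis dvd_diff dvd_refl)
      hence "[y = v] (mod p)" by (simp add: cong_iff_dvd_diff)
      moreover have "0 \<le> v" "v < p" using u0 un unfolding v_def by auto
      ultimately have "y = v" using y mod_small_eq by blast
      thus ?thesis by simp
    qed
  next
    fix y assume "y \<in> {u, v}"
    moreover have "0 \<le> v" "v < p" using u0 un unfolding v_def by auto
    moreover have "\<not> [u = 0] (mod p)" using u0 un unfolding cong_def by simp
    moreover have "\<not> [v = 0] (mod p)"
    proof -
      have "v mod p = v" by (rule mod_pos_pos_trivial) (use u0 un in \<open>simp_all add: v_def\<close>)
      moreover have "v \<noteq> 0" using u0 un unfolding v_def by simp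
      ultimately show ?thesis unfolding cong_def by simp
    qed
    ultimately show "y \<in> {y\<in>{0..<p}. [c = y^2] (mod p) \<and> \<not> [y = 0] (mod p)}"
      using u0 uc vc by (auto intro: cong_sym)
  qed
  thus ?thesis using uv by simp
qed

lemma card_pairs: "card {(i::nat, j). j < i \<and> i < l} = l * (l - 1) div 2"
proof -
  have "2 * card {(i::nat, j). j < i \<and> i < l} = l * (l - 1)"
  proof (induction l)
    case 0 then show ?case by simp
  next
    case (Suc l)
    have e: "{(i::nat, j). j < i \<and> i < Suc l} = {(i, j). j < i \<and> i < l} \<union> (\<lambda>j. (l, j)) ` {0..<l}"
      by auto
    have f: "finite {(i::nat, j). j < i \<and> i < l}"
      by (rule finite_subset[of _ "{0..<l} \<times> {0..<l}"]) auto
    have d: "{(i::nat, j). j < i \<and> i < l} \<inter> (\<lambda>j. (l, j)) ` {0..<l} = {}" by auto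
    have "card {(i::nat, j). j < i \<and> i < Suc l} = card {(i, j). j < i \<and> i < l} + l"
      unfolding e using f d by (simp add: card_Un_disjoint card_image inj_on_def)
    thus ?case using Suc.IH by (cases l) (auto simp: algebra_simps)
  qed
  thus ?thesis by simp
qed

lemma add_mod_cancel:
  fixes x y p a :: int
  assumes "0 \<le> x" "x < p" "0 \<le> y" "y < p" "(x + a) mod p = (y + a) mod p"
  shows "x = y"
proof -
  have "[x + a = y + a] (mod p)" using assms(5) by (simp add: cong_def)
  hence "[x = y] (mod p)" by (simp add: cong_add_rcancel)
  thus ?thesis using assms by (simp add: cong_def)
qed

lemma tuple_val: "r \<in> tuples p l \<Longrightarrow> i < l \<Longrightarrow> 0 \<le> r i \<and> r i < p"
  unfolding tuples_def by auto

lemma rel_equiv: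
  fixes p :: int
  assumes "p > 0"
  shows "equiv (tuples p l) (tuple_rel p l)"
proof (rule equivI)
  show "tuple_rel p l \<subseteq> tuples p l \<times> tuples p l" unfolding tuple_rel_def by auto
next
  show "refl_on (tuples p l) (tuple_rel p l)"
  proof (rule refl_onI)
    fix r assume r: "r \<in> tuples p l"
    have "\<forall>i<l. r i = (r (id i) + 0) mod p" using tuple_val[OF r] by simp
    hence "\<exists>\<sigma> a. bij_betw \<sigma> {0..<l} {0..<l} \<and> (\<forall>i<l. r i = (r (\<sigma> i) + a) mod p)"
      using bij_betw_id by blast
    thus "(r, r) \<in> tuple_rel p l" unfolding tuple_rel_def using r by simp
  qed
next
  show "sym (tuple_rel p l)"
  proof (rule symI)
    fix r s assume "(r, s) \<in> tuple_rel p l"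
    hence "r \<in> tuples p l \<and> s \<in> tuples p l \<and> (\<exists>\<sigma> a. bij_betw \<sigma> {0..<l} {0..<l} \<and> (\<forall>i<l. s i = (r (\<sigma> i) + a) mod p))"
      unfolding tuple_rel_def by simp
    then obtain \<sigma> a where r: "r \<in> tuples p l" and s: "s \<in> tuples p l"
      and bij: "bij_betw \<sigma> {0..<l} {0..<l}" and eq: "\<forall>i<l. s i = (r (\<sigma> i) + a) mod p"
      by blast
    define \<tau> where "\<tau> = inv_into {0..<l} \<sigma>"
    have bt: "bij_betw \<tau> {0..<l} {0..<l}" unfolding \<tau>_def by (rule bij_betw_inv_into[OF bij])
    have "r i = (s (\<tau> i) + (-a)) mod p" if i: "i < l" for i
    proof -
      have ti: "\<tau> i < l" using bt i by (auto simp: bij_betw_def)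
      have st: "\<sigma> (\<tau> i) = i" unfolding \<tau>_def using bij i by (simp add: bij_betw_inv_into_right)
      have "s (\<tau> i) = (r (\<sigma> (\<tau> i)) + a) mod p" using eq ti by blast
      hence "s (\<tau> i) = (r i + a) mod p" unfolding st .
      hence "(s (\<tau> i) + (-a)) mod p = ((r i + a) mod p + (-a)) mod p" by simp
      also have "\<dots> = (r i + a + (-a)) mod p" by (rule mod_add_left_eq)
      also have "\<dots> = r i" using tuple_val[OF r i] by simp
      finally show ?thesis by simp
    qed
    hence "\<exists>\<sigma> a. bij_betw \<sigma> {0..<l} {0..<l} \<and> (\<forall>i<l. r i = (s (\<sigma> i) + a) mod p)"
      using bt by blast
    thus "(s, r) \<in> tuple_rel p l" unfolding tuple_rel_def using r s by simp
  qed
next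
  show "trans (tuple_rel p l)"
  proof (rule transI)
    fix r s t assume "(r, s) \<in> tuple_rel p l" "(s, t) \<in> tuple_rel p l"
    hence "r \<in> tuples p l \<and> (\<exists>\<sigma> a. bij_betw \<sigma> {0..<l} {0..<l} \<and> (\<forall>i<l. s i = (r (\<sigma> i) + a) mod p))"
      and "t \<in> tuples p l \<and> (\<exists>\<sigma> a. bij_betw \<sigma> {0..<l} {0..<l} \<and> (\<forall>i<l. t i = (s (\<sigma> i) + a) mod p))"
      unfolding tuple_rel_def by simp_all
    then obtain \<sigma> a \<tau> b where r: "r \<in> tuples p l" and t: "t \<in> tuples p l"
      and b1: "bij_betw \<sigma> {0..<l} {0..<l}" and eq1: "\<forall>i<l. s i = (r (\<sigma> i) + a) mod p"
      and b2: "bij_betw \<tau> {0..<l} {0..<l}" and eq2: "\<forall>i<l. t i = (s (\<tau> i) + b) mod p"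
      by blast
    have bt: "bij_betw (\<sigma> \<circ> \<tau>) {0..<l} {0..<l}" using b1 b2 by (rule bij_betw_trans[rotated])
    have "t i = (r ((\<sigma> \<circ> \<tau>) i) + (a + b)) mod p" if i: "i < l" for i
    proof -
      have ti: "\<tau> i < l" using b2 i by (auto simp: bij_betw_def)
      have "t i = (s (\<tau> i) + b) mod p" using eq2 i by blast
      also have "s (\<tau> i) = (r (\<sigma> (\<tau> i)) + a) mod p" using eq1 ti by blast
      finally have "t i = ((r (\<sigma> (\<tau> i)) + a) mod p + b) mod p" .
      also have "\<dots> = (r (\<sigma> (\<tau> i)) + (a + b)) mod p" by (simp add: mod_add_left_eq add.assoc)
      finally show ?thesis by simp
    qed
    hence "\<exists>\<sigma> a. bij_betw \<sigma> {0..<l} {0..<l} \<and> (\<forall>i<l. t i = (r (\<sigma> i) + a) mod p)"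
      using bt by blast
    thus "(r, t) \<in> tuple_rel p l" unfolding tuple_rel_def using r t by simp
  qed
qed

definition good :: "int \<Rightarrow> nat \<Rightarrow> (nat \<Rightarrow> int) \<Rightarrow> bool" where
  "good p l r \<longleftrightarrow> r \<in> tuples p l \<and> (\<forall>i<l. \<forall>j<l. i \<noteq> j \<longrightarrow> QuadRes p (r i - r j))"

lemma QuadRes_cong: "QuadRes p x \<Longrightarrow> [x = y] (mod p) \<Longrightarrow> QuadRes p y"
proof -
  assume "QuadRes p x" "[x = y] (mod p)"
  then obtain z where "[z^2 = x] (mod p)" unfolding QuadRes_def by blast
  hence "[z^2 = y] (mod p)" using \<open>[x = y] (mod p)\<close> by (rule cong_trans)
  thus ?thesis unfolding QuadRes_def by blast
qed

lemma good_rel: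
  assumes "(r, s) \<in> tuple_rel p l" "good p l r"
  shows "good p l s"
proof -
  have "s \<in> tuples p l \<and> (\<exists>\<sigma> a. bij_betw \<sigma> {0..<l} {0..<l} \<and> (\<forall>i<l. s i = (r (\<sigma> i) + a) mod p))"
      using assms(1) unfolding tuple_rel_def by simp
  then obtain \<sigma> a where s: "s \<in> tuples p l"
      and bij: "bij_betw \<sigma> {0..<l} {0..<l}" and eq: "\<forall>i<l. s i = (r (\<sigma> i) + a) mod p"
      by blast
  have "QuadRes p (s i - s j)" if "i < l" "j < l" "i \<noteq> j" for i j
  proof -
    have "\<sigma> ` {0..<l} = {0..<l}" "inj_on \<sigma> {0..<l}" using bij unfolding bij_betw_def by auto
    hence "\<sigma> i < l" "\<sigma> j < l" "\<sigma> i \<noteq> \<sigma> j" using that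
      by (auto simp: inj_on_eq_iff)
    hence q: "QuadRes p (r (\<sigma> i) - r (\<sigma> j))" using assms(2) unfolding good_def by simp
    have "s i = (r (\<sigma> i) + a) mod p" "s j = (r (\<sigma> j) + a) mod p" using eq that by blast+
    hence "(s i - s j) mod p = (r (\<sigma> i) - r (\<sigma> j)) mod p" by (simp add: mod_diff_eq)
    hence "[r (\<sigma> i) - r (\<sigma> j) = s i - s j] (mod p)" unfolding cong_def by simp
    thus ?thesis using q QuadRes_cong by blast
  qed
  thus ?thesis using s unfolding good_def by simp
qed

lemma class_card:
  fixes p :: int
  assumes pp: "prime p" and p2: "p > 2" and l0: "l > 0" and g: "good p l r"
  shows "card (tuple_rel p l `` {r}) = fact l * nat p"
proof -
  have p0: "p > 0" using p2 by simp
  have r: "r \<in> tuples p l" using g unfolding good_def by simp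
  have rinj: "inj_on r {0..<l}" using r unfolding tuples_def by simp
  define \<Phi> where "\<Phi> = (\<lambda>(\<sigma>::nat\<Rightarrow>nat, a::int). (\<lambda>i. if i < l then (r (\<sigma> i) + a) mod p else 0))"
  define S where "S = {\<sigma>. \<sigma> permutes {0..<l}} \<times> {0..<p}"
  have img: "tuple_rel p l `` {r} = \<Phi> ` S"
  proof (intro equalityI subsetI)
    fix s assume "s \<in> tuple_rel p l `` {r}"
    hence "(r, s) \<in> tuple_rel p l" by simp
    hence "s \<in> tuples p l \<and> (\<exists>\<sigma> a. bij_betw \<sigma> {0..<l} {0..<l} \<and> (\<forall>i<l. s i = (r (\<sigma> i) + a) mod p))"
      unfolding tuple_rel_def by simp
    then obtain \<sigma> a where s: "s \<in> tuples p l"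
      and bij: "bij_betw \<sigma> {0..<l} {0..<l}" and eq: "\<forall>i<l. s i = (r (\<sigma> i) + a) mod p"
      by blast
    define \<sigma>' where "\<sigma>' = (\<lambda>i. if i < l then \<sigma> i else i)"
    have "bij_betw \<sigma>' {0..<l} {0..<l}"
      using bij bij_betw_cong[of "{0..<l}" \<sigma>' \<sigma> "{0..<l}"] unfolding \<sigma>'_def by simp
    hence perm: "\<sigma>' permutes {0..<l}"
      by (rule bij_imp_permutes) (simp add: \<sigma>'_def)
    have "s = \<Phi> (\<sigma>', a mod p)"
    proof
      fix i show "s i = \<Phi> (\<sigma>', a mod p) i"
      proof (cases "i < l")
        case True
        have "s i = (r (\<sigma> i) + a) mod p" using eq True by blast
        also have "\<dots> = (r (\<sigma> i) + a mod p) mod p" by (simp add: mod_add_right_eq)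
        finally show ?thesis unfolding \<Phi>_def \<sigma>'_def using True by simp
      next
        case False
        hence "s i = 0" using s unfolding tuples_def by simp
        thus ?thesis unfolding \<Phi>_def using False by simp
      qed
    qed
    moreover have "(\<sigma>', a mod p) \<in> S" unfolding S_def using perm p0 by simp
    ultimately show "s \<in> \<Phi> ` S" by blast
  next
    fix s assume "s \<in> \<Phi> ` S"
    then obtain x where x: "x \<in> S" "s = \<Phi> x" by (rule imageE)
    obtain \<sigma> a where xx: "x = (\<sigma>, a)" by (cases x)
    have sa: "(\<sigma>, a) \<in> S" and s: "s = \<Phi> (\<sigma>, a)" using x xx by simp_all
    have perm: "\<sigma> permutes {0..<l}" using sa unfolding S_def by simp
    have sl: "\<sigma> i < l" if "i < l" for i using permutes_in_image[OF perm, of i] that by simp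
    have si: "s i = (r (\<sigma> i) + a) mod p" if "i < l" for i using that unfolding s \<Phi>_def by simp
    have "inj_on s {0..<l}"
    proof (rule inj_onI)
      fix i j assume ij: "i \<in> {0..<l}" "j \<in> {0..<l}" "s i = s j"
      hence "(r (\<sigma> i) + a) mod p = (r (\<sigma> j) + a) mod p" using si by simp
      hence "r (\<sigma> i) = r (\<sigma> j)"
        using add_mod_cancel tuple_val[OF r sl] ij by (meson atLeastLessThan_iff)
      hence "\<sigma> i = \<sigma> j" using rinj sl ij by (simp add: inj_on_eq_iff)
      thus "i = j" using permutes_inj[OF perm] by (simp add: inj_eq)
    qed
    moreover have "\<forall>i<l. s i \<in> {0..<p}" using si p0 by simp
    moreover have "\<forall>i\<ge>l. s i = 0" unfolding s \<Phi>_def by simp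
    ultimately have st: "s \<in> tuples p l" unfolding tuples_def by simp
    have "bij_betw \<sigma> {0..<l} {0..<l}" using permutes_imp_bij[OF perm] .
    hence "\<exists>\<sigma> a. bij_betw \<sigma> {0..<l} {0..<l} \<and> (\<forall>i<l. s i = (r (\<sigma> i) + a) mod p)"
      using si by blast
    hence "(r, s) \<in> tuple_rel p l" unfolding tuple_rel_def using r st by simp
    thus "s \<in> tuple_rel p l `` {r}" by simp
  qed
  have inj: "inj_on \<Phi> S"
  proof (rule inj_onI)
    fix x y assume x: "x \<in> S" and y: "y \<in> S" and e: "\<Phi> x = \<Phi> y"
    obtain \<sigma>1 a1 where x': "x = (\<sigma>1, a1)" by (cases x)
    obtain \<sigma>2 a2 where y': "y = (\<sigma>2, a2)" by (cases y)
    have perm1: "\<sigma>1 permutes {0..<l}" and a1: "0 \<le> a1" "a1 < p" using x unfolding x' S_def by auto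
    have perm2: "\<sigma>2 permutes {0..<l}" and a2: "0 \<le> a2" "a2 < p" using y unfolding y' S_def by auto
    have sl1: "\<sigma>1 i < l" if "i < l" for i using permutes_in_image[OF perm1, of i] that by simp
    have sl2: "\<sigma>2 i < l" if "i < l" for i using permutes_in_image[OF perm2, of i] that by simp
    have eq: "(r (\<sigma>1 i) + a1) mod p = (r (\<sigma>2 i) + a2) mod p" if "i < l" for i
    proof -
      have "\<Phi> (\<sigma>1, a1) i = \<Phi> (\<sigma>2, a2) i" using e unfolding x' y' by simp
      thus ?thesis using that unfolding \<Phi>_def by simp
    qed
    have aeq: "a1 = a2"
    proof (rule ccontr)
      assume ne: "a1 \<noteq> a2"
      define b where "b = a1 - a2"
      define R where "R = r ` {0..<l}"
      have clos: "(w + b) mod p \<in> R" if wR: "w \<in> R" for w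
      proof -
        obtain k where k0: "k \<in> {0..<l}" and k1: "w = r k" using wR unfolding R_def by (rule imageE)
        have k: "k < l" "w = r k" using k0 k1 by simp_all
        define i where "i = Hilbert_Choice.inv \<sigma>1 k"
        have i: "i < l" using permutes_in_image[OF permutes_inv[OF perm1], of k] k unfolding i_def by simp
        have si: "\<sigma>1 i = k" unfolding i_def by (rule permutes_inverses(1)[OF perm1])
        have "(r k + a1) mod p = (r (\<sigma>2 i) + a2) mod p" using eq[OF i] si by simp
        have "(w + b) mod p = ((r k + a1) mod p - a2) mod p" unfolding k b_def by (simp add: mod_diff_left_eq algebra_simps)
        also have "\<dots> = ((r (\<sigma>2 i) + a2) mod p - a2) mod p" using eq[OF i] si by simp
        also have "\<dots> = r (\<sigma>2 i) mod p" by (simp add: mod_diff_left_eq)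
        also have "\<dots> = r (\<sigma>2 i)" using tuple_val[OF r sl2[OF i]] by simp
        finally show ?thesis unfolding R_def using sl2[OF i] by simp
      qed
      have iter: "(r 0 + int m * b) mod p \<in> R" for m
      proof (induction m)
        case 0
        show ?case using tuple_val[OF r l0] l0 unfolding R_def by simp
      next
        case (Suc m)
        have "(r 0 + int (Suc m) * b) mod p = ((r 0 + int m * b) + b) mod p"
          by (simp add: algebra_simps)
        also have "\<dots> = ((r 0 + int m * b) mod p + b) mod p" by (rule mod_add_left_eq[symmetric])
        finally have "(r 0 + int (Suc m) * b) mod p = ((r 0 + int m * b) mod p + b) mod p" .
        thus ?case using clos[OF Suc.IH] by simp
      qed
      have "\<not> p dvd b"
      proof
        assume "p dvd b" hence "[a1 = a2] (mod p)" unfolding b_def by (simp add: cong_iff_dvd_diff)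
        hence "a1 = a2" using a1 a2 mod_small_eq by blast
        thus False using ne by simp
      qed
      hence "coprime p b" using prime_imp_coprime[OF pp] by blast
      hence "coprime b p" by (simp add: coprime_commute)
      then obtain z where z: "[b * z = 1] (mod p)" using cong_solve_coprime_int by blast
      have all: "t \<in> R" if t: "0 \<le> t" "t < p" for t
      proof -
        define m where "m = nat ((z * (t - r 0)) mod p)"
        have m: "int m = (z * (t - r 0)) mod p" unfolding m_def using p0 by simp
        have "[int m = z * (t - r 0)] (mod p)" unfolding m cong_def by simp
        hence "[int m * b = z * (t - r 0) * b] (mod p)" by (rule cong_mult) (rule cong_refl)
        moreover have "z * (t - r 0) * b = (b * z) * (t - r 0)" by (simp add: algebra_simps)
        moreover have "[(b * z) * (t - r 0) = 1 * (t - r 0)] (mod p)" using z by (rule cong_mult) (rule cong_refl)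
        ultimately have "[int m * b = t - r 0] (mod p)" using cong_trans by simp
        hence "[r 0 + int m * b = r 0 + (t - r 0)] (mod p)" by (rule cong_add[OF cong_refl])
        hence "(r 0 + int m * b) mod p = t mod p" unfolding cong_def by simp
        also have "\<dots> = t" using t by simp
        finally show ?thesis using iter[of m] by simp
      qed
      obtain n where n: "0 < n" "n < p" "\<not> QuadRes p n" using nonres[OF pp p2] by blast
      have "0 \<in> R" "n \<in> R" using all n p0 by auto
      then obtain i j where ij: "i < l" "j < l" "r i = n" "r j = 0" unfolding R_def by auto
      hence "i \<noteq> j" using n by auto
      hence "QuadRes p (r i - r j)" using g ij(1,2) unfolding good_def by blast
      thus False using ij n by simp
    qed
    have "\<sigma>1 = \<sigma>2"
    proof
      fix i show "\<sigma>1 i = \<sigma>2 i"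
      proof (cases "i < l")
        case True
        have "(r (\<sigma>1 i) + a1) mod p = (r (\<sigma>2 i) + a1) mod p" using eq[OF True] aeq by simp
        hence "r (\<sigma>1 i) = r (\<sigma>2 i)"
          using add_mod_cancel tuple_val[OF r sl1[OF True]] tuple_val[OF r sl2[OF True]] by blast
        thus ?thesis using rinj sl1[OF True] sl2[OF True] by (simp add: inj_on_eq_iff)
      next
        case False
        thus ?thesis using permutes_not_in[OF perm1] permutes_not_in[OF perm2] by simp
      qed
    qed
    thus "x = y" unfolding x' y' using aeq by simp
  qed
  have cS: "card S = fact l * nat p"
    unfolding S_def card_cartesian_product using card_permutations[of "{0..<l}" l] by simp
  show ?thesis unfolding img card_image[OF inj] cS ..
qed

lemma tuple_ndvd:
  assumes "r \<in> tuples p l" "i < l" "j < l" "i \<noteq> j"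
  shows "\<not> p dvd (r i - r j)"
proof
  assume "p dvd (r i - r j)"
  hence "[r i = r j] (mod p)" by (simp add: cong_iff_dvd_diff)
  hence "r i = r j" using tuple_val[OF assms(1) assms(2)] tuple_val[OF assms(1) assms(3)] mod_small_eq by blast
  moreover have "inj_on r {0..<l}" using assms(1) unfolding tuples_def by simp
  ultimately show False using assms(2-4) by (simp add: inj_on_eq_iff)
qed

lemma graph_good:
  assumes r: "r \<in> tuples p l"
  shows "graph_iso l (tuple_graph p r) complete_graph \<longleftrightarrow> (\<forall>i<l. \<forall>j<l. i \<noteq> j \<longrightarrow> QuadRes p (r i - r j))"
proof
  assume "graph_iso l (tuple_graph p r) complete_graph"
  then obtain f where bij: "bij_betw f {0..<l} {0..<l}"
    and e: "\<forall>i\<in>{0..<l}. \<forall>j\<in>{0..<l}. tuple_graph p r i j \<longleftrightarrow> complete_graph (f i) (f j)"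
    unfolding graph_iso_def by blast
  have inj: "inj_on f {0..<l}" using bij unfolding bij_betw_def by simp
  show "\<forall>i<l. \<forall>j<l. i \<noteq> j \<longrightarrow> QuadRes p (r i - r j)"
  proof (intro allI impI)
    fix i j assume ij: "i < l" "j < l" "i \<noteq> j"
    hence "f i \<noteq> f j" using inj by (simp add: inj_on_eq_iff)
    hence "tuple_graph p r i j" using e ij unfolding complete_graph_def by simp
    thus "QuadRes p (r i - r j)" unfolding tuple_graph_def by simp
  qed
next
  assume q: "\<forall>i<l. \<forall>j<l. i \<noteq> j \<longrightarrow> QuadRes p (r i - r j)"
  have "tuple_graph p r i j \<longleftrightarrow> complete_graph (id i) (id j)" if "i \<in> {0..<l}" "j \<in> {0..<l}" for i j
  proof (cases "i = j")
    case True thus ?thesis unfolding tuple_graph_def complete_graph_def by simp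
  next
    case False
    have "i < l" "j < l" using that by simp_all
    hence "QuadRes p (r i - r j)" "\<not> p dvd (r i - r j)" using q tuple_ndvd[OF r] False by blast+
    thus ?thesis using False unfolding tuple_graph_def complete_graph_def by simp
  qed
  hence "\<forall>i\<in>{0..<l}. \<forall>j\<in>{0..<l}. tuple_graph p r i j \<longleftrightarrow> complete_graph (id i) (id j)" by blast
  thus "graph_iso l (tuple_graph p r) complete_graph"
    unfolding graph_iso_def using bij_betw_id by blast
qed

lemma finite_tuples: "finite (tuples p l)"
proof -
  define h where "h = (\<lambda>f::nat\<Rightarrow>int. \<lambda>i. if i < l then f i else 0)"
  have "tuples p l \<subseteq> h ` (PiE {0..<l} (\<lambda>_. {0..<p}))"
  proof
    fix r assume r: "r \<in> tuples p l"
    have "r = h (restrict r {0..<l})" unfolding h_def using r unfolding tuples_def by auto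
    moreover have "restrict r {0..<l} \<in> PiE {0..<l} (\<lambda>_. {0..<p})" using r unfolding tuples_def by auto
    ultimately show "r \<in> h ` (PiE {0..<l} (\<lambda>_. {0..<p}))" by blast
  qed
  moreover have "finite (PiE {0..<l} (\<lambda>_. {0..<p::int}))" by (rule finite_PiE) auto
  ultimately show ?thesis using finite_subset by blast
qed

definition Ys :: "int \<Rightarrow> nat \<Rightarrow> (nat \<Rightarrow> int) \<Rightarrow> (nat \<Rightarrow> nat \<Rightarrow> int) set" where
  "Ys p l r = {y. (\<forall>i j. (j < i \<and> i < l) \<longrightarrow> y i j \<in> {0..<p}) \<and>
      (\<forall>i j. \<not> (j < i \<and> i < l) \<longrightarrow> y i j = 0) \<and>
      (\<forall>i j. j < i \<and> i < l \<longrightarrow> [r i - r j = (y i j)^2] (mod p) \<and> \<not> [y i j = 0] (mod p))}"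

lemma Ys_D:
  assumes "y \<in> Ys p l r" "j < i" "i < l"
  shows "y i j \<in> {0..<p} \<and> [r i - r j = (y i j)^2] (mod p) \<and> \<not> [y i j = 0] (mod p)"
proof -
  have "\<forall>i j. (j < i \<and> i < l) \<longrightarrow> y i j \<in> {0..<p}"
    "\<forall>i j. j < i \<and> i < l \<longrightarrow> [r i - r j = (y i j)^2] (mod p) \<and> \<not> [y i j = 0] (mod p)"
    using assms(1) unfolding Ys_def by simp_all
  thus ?thesis using assms(2,3) by blast
qed

lemma Ys_Z:
  assumes "y \<in> Ys p l r" "\<not> (j < i \<and> i < l)"
  shows "y i j = 0"
proof -
  have "\<forall>i j. \<not> (j < i \<and> i < l) \<longrightarrow> y i j = 0"
    using assms(1) unfolding Ys_def by simp
  thus ?thesis using assms(2) by blast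
qed

lemma Ys_card:
  fixes p :: int
  assumes pp: "prime p" and p2: "p > 2" and g: "good p l r"
  shows "card (Ys p l r) = 2 ^ (l * (l - 1) div 2) \<and> finite (Ys p l r)"
proof -
  have r: "r \<in> tuples p l" using g unfolding good_def by simp
  define P where "P = {(i::nat, j). j < i \<and> i < l}"
  define Sq where "Sq = (\<lambda>c. {y\<in>{0..<p}. [c = y^2] (mod p) \<and> \<not> [y = 0] (mod p)})"
  define F where "F = (\<lambda>y::nat\<Rightarrow>nat\<Rightarrow>int. restrict (\<lambda>(i,j). y i j) P)"
  define T where "T = PiE P (\<lambda>(i,j). Sq (r i - r j))"
  have finP: "finite P" unfolding P_def
    by (rule finite_subset[of _ "{0..<l} \<times> {0..<l}"]) auto
  have inj: "inj_on F (Ys p l r)"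
  proof (rule inj_onI)
    fix y1 y2 assume y1: "y1 \<in> Ys p l r" and y2: "y2 \<in> Ys p l r" and e: "F y1 = F y2"
    show "y1 = y2"
    proof (intro ext)
      fix i j show "y1 i j = y2 i j"
      proof (cases "(i, j) \<in> P")
        case True
        have "F y1 (i, j) = F y2 (i, j)" using e by simp
        thus ?thesis using True unfolding F_def by simp
      next
        case False
        hence "\<not> (j < i \<and> i < l)" unfolding P_def by simp
        thus ?thesis using Ys_Z[OF y1] Ys_Z[OF y2] by simp
      qed
    qed
  qed
  have img: "F ` (Ys p l r) = T"
  proof (intro equalityI subsetI)
    fix g assume "g \<in> F ` (Ys p l r)"
    then obtain y where y: "y \<in> Ys p l r" "g = F y" by (rule imageE)
    have "g x \<in> (\<lambda>(i,j). Sq (r i - r j)) x" if "x \<in> P" for x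
    proof -
      obtain i j where x: "x = (i, j)" by (cases x)
      have ij: "j < i" "i < l" using that unfolding x P_def by auto
      have "g x = y i j" using that unfolding y(2) F_def x by simp
      thus ?thesis unfolding x Sq_def using Ys_D[OF y(1) ij] by simp
    qed
    moreover have "g x = undefined" if "x \<notin> P" for x using that unfolding y(2) F_def by simp
    ultimately show "g \<in> T" unfolding T_def by (rule PiE_I)
  next
    fix g assume gT: "g \<in> T"
    define y where "y = (\<lambda>i j. if (i, j) \<in> P then g (i, j) else 0)"
    have gv: "g (i, j) \<in> Sq (r i - r j)" if "(i, j) \<in> P" for i j
      using PiE_mem[OF gT[unfolded T_def] that] by simp
    have c1: "y i j \<in> {0..<p}" if "j < i \<and> i < l" for i j
    proof -
      have "(i, j) \<in> P" using that unfolding P_def by simp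
      thus ?thesis using gv[of i j] unfolding y_def Sq_def by simp
    qed
    have c2: "y i j = 0" if "\<not> (j < i \<and> i < l)" for i j
    proof -
      have "(i, j) \<notin> P" using that unfolding P_def by simp
      thus ?thesis unfolding y_def by simp
    qed
    have c3: "[r i - r j = (y i j)^2] (mod p) \<and> \<not> [y i j = 0] (mod p)" if "j < i \<and> i < l" for i j
    proof -
      have "(i, j) \<in> P" using that unfolding P_def by simp
      thus ?thesis using gv[of i j] unfolding y_def Sq_def by simp
    qed
    have yY: "y \<in> Ys p l r" unfolding Ys_def using c1 c2 c3 by blast
    have Fy: "F y = g"
    proof
      fix x show "F y x = g x"
      proof (cases "x \<in> P")
        case True
        obtain i j where x: "x = (i, j)" by (cases x)
        show ?thesis using True unfolding F_def y_def x by simp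
      next
        case False
        have "g x = undefined" using PiE_arb[OF gT[unfolded T_def] False] .
        thus ?thesis using False unfolding F_def by simp
      qed
    qed
    show "g \<in> F ` (Ys p l r)" using Fy yY by blast
  qed
  have sq2: "card ((\<lambda>(i,j). Sq (r i - r j)) x) = 2" if "x \<in> P" for x
  proof -
    obtain i j where x: "x = (i, j)" by (cases x)
    have ij: "j < i" "i < l" using that unfolding x P_def by auto
    have "QuadRes p (r i - r j)" using g ij unfolding good_def by simp
    moreover have "\<not> p dvd (r i - r j)" using tuple_ndvd[OF r] ij by simp
    ultimately show ?thesis unfolding x Sq_def using sqrt_card[OF pp p2] by simp
  qed
  have finSq: "finite (Sq c)" for c
    unfolding Sq_def by (rule finite_subset[of _ "{0..<p}"]) auto
  have finT: "finite T" unfolding T_def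
    by (rule finite_PiE[OF finP]) (simp add: finSq split: prod.splits)
  have "card T = (\<Prod>x\<in>P. card ((\<lambda>(i,j). Sq (r i - r j)) x))"
    unfolding T_def by (rule card_PiE[OF finP])
  also have "\<dots> = (\<Prod>x\<in>P. 2)" using sq2 by (rule prod.cong[OF refl])
  also have "\<dots> = 2 ^ card P" by simp
  also have "card P = l * (l - 1) div 2" unfolding P_def by (rule card_pairs)
  finally have cT: "card T = 2 ^ (l * (l - 1) div 2)" .
  have "card (Ys p l r) = card T" using card_image[OF inj] img by simp
  moreover have "finite (Ys p l r)" using finite_imageD[of F "Ys p l r"] finT img inj by simp
  ultimately show ?thesis using cT by simp
qed

lemma Y_good:
  fixes p :: int
  assumes pp: "prime p" and m1: "QuadRes p (-1)"
    and A1: "\<forall>i<l. r i \<in> {0..<p}" and A2: "\<forall>i\<ge>l. r i = 0" and y: "y \<in> Ys p l r"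
  shows "good p l r"
proof -
  have key: "r a \<noteq> r b" if ab: "b < a" "a < l" for a b
  proof
    assume e: "r a = r b"
    have h: "[r a - r b = (y a b)^2] (mod p)" "\<not> [y a b = 0] (mod p)" using Ys_D[OF y ab] by simp_all
    have "p dvd (y a b)^2" using h(1) e by (simp add: cong_iff_dvd_diff)
    hence "p dvd y a b" using pp prime_dvd_power_iff by (metis prime_dvd_mult_iff power2_eq_square)
    thus False using h(2) by (simp add: cong_iff_dvd_diff)
  qed
  have inj: "inj_on r {0..<l}"
  proof (rule inj_onI)
    fix i j assume ij: "i \<in> {0..<l}" "j \<in> {0..<l}" "r i = r j"
    show "i = j"
    proof (rule ccontr)
      assume "i \<noteq> j"
      hence "j < i \<or> i < j" by arith
      thus False using key ij by (metis atLeastLessThan_iff)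
    qed
  qed
  have q: "QuadRes p (r i - r j)" if ij: "i < l" "j < l" "i \<noteq> j" for i j
  proof (cases "j < i")
    case True
    have "[r i - r j = (y i j)^2] (mod p)" using Ys_D[OF y True ij(1)] by simp
    thus ?thesis unfolding QuadRes_def using cong_sym by blast
  next
    case False
    hence ji: "i < j" using ij by simp
    have h: "[(y j i)^2 = r j - r i] (mod p)" using Ys_D[OF y ji ij(2)] cong_sym by blast
    obtain z where z: "[z^2 = -1] (mod p)" using m1 unfolding QuadRes_def by blast
    have "[z^2 * (y j i)^2 = (-1) * (r j - r i)] (mod p)" using z h by (rule cong_mult)
    hence "[(z * y j i)^2 = r i - r j] (mod p)" by (simp add: power_mult_distrib)
    thus ?thesis unfolding QuadRes_def by blast
  qed
  have "r \<in> tuples p l" unfolding tuples_def using A1 A2 inj by simp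
  thus ?thesis unfolding good_def using q by blast
qed

lemma Y0_eq:
  fixes p :: int
  assumes pp: "prime p" and m1: "QuadRes p (-1)"
  shows "Y0_points p l = Sigma {r. good p l r} (Ys p l)"
proof -
  have "Y0_points p l = {(r, y). ((\<forall>i<l. r i \<in> {0..<p}) \<and> (\<forall>i\<ge>l. r i = 0)) \<and> y \<in> Ys p l r}"
    unfolding Y0_points_def Ys_def by simp
  also have "\<dots> = Sigma {r. good p l r} (Ys p l)"
  proof (intro equalityI subsetI)
    fix x assume "x \<in> {(r, y). ((\<forall>i<l. r i \<in> {0..<p}) \<and> (\<forall>i\<ge>l. r i = 0)) \<and> y \<in> Ys p l r}"
    then obtain r y where x: "x = (r, y)" and A: "\<forall>i<l. r i \<in> {0..<p}" "\<forall>i\<ge>l. r i = 0"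
      and y: "y \<in> Ys p l r" by blast
    have "good p l r" using Y_good[OF pp m1 A y] .
    thus "x \<in> Sigma {r. good p l r} (Ys p l)" using x y by simp
  next
    fix x assume "x \<in> Sigma {r. good p l r} (Ys p l)"
    then obtain r y where x: "x = (r, y)" and g: "good p l r" and y: "y \<in> Ys p l r" by blast
    have "r \<in> tuples p l" using g unfolding good_def by simp
    hence "(\<forall>i<l. r i \<in> {0..<p}) \<and> (\<forall>i\<ge>l. r i = 0)" unfolding tuples_def by simp
    thus "x \<in> {(r, y). ((\<forall>i<l. r i \<in> {0..<p}) \<and> (\<forall>i\<ge>l. r i = 0)) \<and> y \<in> Ys p l r}"
      using x y by simp
  qed
  finally show ?thesis .
qed

theorem mainTheorem4:
  fixes p :: int and l :: nat
  assumes "prime p" and "[p = 1] (mod 4)" and "l \<ge> 2"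
  shows "real (n_p p l complete_graph) =
     real (card (Y0_points p l)) / (2 ^ (l * (l - 1) div 2) * fact l * real_of_int p)"
proof -
  note pp = assms(1)
  have "p mod 4 = 1" using assms(2) by (simp add: cong_def)
  moreover have "p \<ge> 2" using pp prime_ge_2_int by blast
  ultimately have p2: "p > 2" by (cases "p = 2") auto
  have p0: "p > 0" using p2 by simp
  have m1: "QuadRes p (-1)" using minus_one_QR[OF assms(1,2)] .
  have l0: "l > 0" using assms(3) by simp
  have eqv: "equiv (tuples p l) (tuple_rel p l)" using rel_equiv[OF p0] .
  define Q where "Q = tuples p l // tuple_rel p l"
  define N where "N = {C \<in> Q. \<exists>r\<in>C. graph_iso l (tuple_graph p r) complete_graph}"
  define G where "G = {r. good p l r}"
  define d where "d = l * (l - 1) div 2"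
  have N_alt: "N = {C \<in> Q. \<exists>r\<in>C. good p l r}"
  proof -
    have "(\<exists>r\<in>C. graph_iso l (tuple_graph p r) complete_graph) \<longleftrightarrow> (\<exists>r\<in>C. good p l r)" if "C \<in> Q" for C
    proof -
      have "C \<subseteq> tuples p l" using in_quotient_imp_subset[OF eqv] that unfolding Q_def by blast
      thus ?thesis using graph_good unfolding good_def by blast
    qed
    thus ?thesis unfolding N_def by blast
  qed
  have cls: "\<exists>r. good p l r \<and> C = tuple_rel p l `` {r}" if C: "C \<in> N" for C
  proof -
    obtain r where r: "r \<in> C" "good p l r" using C unfolding N_alt by blast
    have "C \<in> Q" using C unfolding N_alt by blast
    then obtain s where s: "s \<in> tuples p l" "C = tuple_rel p l `` {s}" unfolding Q_def by (rule quotientE)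
    have "(s, r) \<in> tuple_rel p l" using r(1) s(2) by simp
    hence "tuple_rel p l `` {s} = tuple_rel p l `` {r}" by (rule equiv_class_eq[OF eqv])
    thus ?thesis using r(2) s(2) by blast
  qed
  have UN: "\<Union>N = G"
  proof (intro equalityI subsetI)
    fix x assume "x \<in> \<Union>N"
    then obtain C where C: "C \<in> N" "x \<in> C" by blast
    obtain r where r: "good p l r" "C = tuple_rel p l `` {r}" using cls[OF C(1)] by blast
    have "(r, x) \<in> tuple_rel p l" using C(2) r(2) by simp
    thus "x \<in> G" using good_rel r(1) unfolding G_def by blast
  next
    fix x assume "x \<in> G"
    hence g: "good p l x" unfolding G_def by simp
    hence xt: "x \<in> tuples p l" unfolding good_def by simp
    have "tuple_rel p l `` {x} \<in> Q" unfolding Q_def using xt by (rule quotientI)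
    moreover have "x \<in> tuple_rel p l `` {x}" using equiv_class_self[OF eqv xt] .
    ultimately have "tuple_rel p l `` {x} \<in> N" unfolding N_alt using g by blast
    thus "x \<in> \<Union>N" using \<open>x \<in> tuple_rel p l `` {x}\<close> by blast
  qed
  have disj: "pairwise disjnt N"
  proof (rule pairwiseI)
    fix X Y assume "X \<in> N" "Y \<in> N" "X \<noteq> Y"
    hence "X \<in> Q" "Y \<in> Q" unfolding N_def by auto
    thus "disjnt X Y" using quotient_disj[OF eqv] \<open>X \<noteq> Y\<close> unfolding Q_def disjnt_def by blast
  qed
  have finC: "finite C" if "C \<in> N" for C
  proof -
    have "C \<in> Q" using that unfolding N_def by simp
    hence "C \<subseteq> tuples p l" using in_quotient_imp_subset[OF eqv] unfolding Q_def by blast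
    thus ?thesis using finite_tuples finite_subset by blast
  qed
  have cardC: "card C = fact l * nat p" if CN: "C \<in> N" for C
  proof -
    obtain r where r: "good p l r" "C = tuple_rel p l `` {r}" using cls[OF CN] by blast
    show ?thesis unfolding r(2) using class_card[OF pp p2 l0 r(1)] .
  qed
  have "card G = card (\<Union>N)" using UN by simp
  also have "\<dots> = sum card N" by (rule card_Union_disjoint[OF disj finC])
  also have "\<dots> = sum (\<lambda>_. fact l * nat p) N" using cardC by (rule sum.cong[OF refl])
  also have "\<dots> = card N * (fact l * nat p)" by simp
  finally have cardG: "card G = card N * (fact l * nat p)" .
  have finG: "finite G"
    by (rule finite_subset[OF _ finite_tuples[of p l]]) (auto simp: G_def good_def)
  have "card (Y0_points p l) = card (Sigma G (Ys p l))" unfolding G_def Y0_eq[OF pp m1] ..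
  also have "\<dots> = (\<Sum>r\<in>G. card (Ys p l r))"
    using finG Ys_card[OF pp p2] unfolding G_def by (intro card_SigmaI) auto
  also have "\<dots> = (\<Sum>r\<in>G. 2 ^ d)"
    using Ys_card[OF pp p2] unfolding G_def d_def by (intro sum.cong) auto
  also have "\<dots> = card G * 2 ^ d" by simp
  finally have cardY: "card (Y0_points p l) = card N * (fact l * nat p) * 2 ^ d" using cardG by simp
  have np: "n_p p l complete_graph = card N" unfolding n_p_def N_def Q_def ..
  have "real (card (Y0_points p l)) = real (card N) * (fact l * real_of_int p * 2 ^ d)"
    unfolding cardY using p0 by (simp add: of_nat_fact)
  moreover have "(fact l :: real) * real_of_int p * 2 ^ d > 0" using p0 by simp
  ultimately show ?thesis unfolding np d_def[symmetric] using p0 by (simp add: field_simps)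
qed

end
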